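(* (GIG quadrature.) Let $\gamma>0$, $\delta>0$, $p\in\mathbb{R}$, $\sigma=\sqrt{\gamma\delta}$, $n\ge1$, and let $\{z_k\}_{k=1}^n$, $\{h_k\}_{k=1}^n$ be the points and weights of the $n$-point Gauss--Hermite quadrature with respect to the standard normal density. Let $x_k=\frac{\delta}{\gamma}\phi_\sigma^{-1}(z_k)$ and $w_k=\frac{2h_k}{1+\phi_\sigma^{-1}(z_k)}$, and define $$ \bar w_k = c(\gamma,\delta,p)\,x_k^{p+1/2}\,w_k,\qquad c(\gamma,\delta,p)=\sqrt{\frac{\pi}{2}}\,\frac{\gamma^p}{\delta^{p+1}}\,\frac{e^{-\gamma\delta}}{K_p(\gamma\delta)}. $$ Then $\{x_k\}$, $\{\bar w_k\}$ serve as a quadrature with respect to the density $f_{\mathrm{GIG}}(x\,|\,\gamma,\delta,p)$, and, writing $\alpha=p+\tfrac12$, it exactly evaluates the moments of order $r=j-\alpha$ for every integer $j$ with $1-n\le j\le n$: if $\bar X\sim\mathrm{GIG}(\gamma,\delta,p)$ then $\mathbb{E}(\bar X^{r})=\sum_{k=1}^n x_k^{r}\,\bar w_k$ for $r\in\{1-n-\alpha,\,2-n-\alpha,\dots,n-\alpha\}$.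
   Context: The generalized inverse Gaussian distribution $\mathrm{GIG}(\gamma,\delta,p)$ has density $f_{\mathrm{GIG}}(x\,|\,\gamma,\delta,p)=\frac{(\gamma/\delta)^p x^{p-1}}{2K_p(\gamma\delta)}\exp\left(-\frac{\gamma^2x^2+\delta^2}{2x}\right)$ for $x>0$, where $K_p$ is the modified Bessel function of the second kind of index $p$. The inverse Gaussian density is $f_{\mathrm{IG}}(x\,|\,\gamma,\delta)=\frac{\delta}{\sqrt{2\pi x^3}}\exp\left(-\frac{(\gamma x-\delta)^2}{2x}\right)$; one has $f_{\mathrm{GIG}}(x\,|\,\gamma,\delta,p)=c(\gamma,\delta,p)\,x^{p+1/2}f_{\mathrm{IG}}(x\,|\,\gamma,\delta)$. The Gauss--Hermite quadrature is with respect to $n(z)=e^{-z^2/2}/\sqrt{2\pi}$: $z_k$ are the roots of the probabilists' Hermite polynomial $He_n$ and $\sum_k h_k q(z_k)=\int q(z)n(z)\,dz$ for polynomials $q$ of degree at most $2n-1$. Here $\phi_\sigma^{-1}(z)=1+\frac{z^2}{2\sigma^2}+\frac{z}{\sigma}\sqrt{1+\frac{z^2}{4\sigma^2}}$. *)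

theory Defs
  imports "HOL-Probability.Probability" "HOL-Computational_Algebra.Polynomial"
begin

definition besselK :: "real \<Rightarrow> real \<Rightarrow> real" where
  "besselK p x = (LBINT t:{0..}. exp (- x * cosh t) * cosh (p * t))"

fun hermiteHe :: "nat \<Rightarrow> real poly" where
  "hermiteHe 0 = 1"
| "hermiteHe (Suc 0) = [:0, 1:]"
| "hermiteHe (Suc (Suc n)) = [:0, 1:] * hermiteHe (Suc n) - smult (real (Suc n)) (hermiteHe n)"

definition gig_density :: "real \<Rightarrow> real \<Rightarrow> real \<Rightarrow> real \<Rightarrow> real" where
  "gig_density \<gamma> \<delta> p x =
     (if x > 0 then (\<gamma> / \<delta>) powr p * x powr (p - 1) / (2 * besselK p (\<gamma> * \<delta>))
        * exp (- (\<gamma>\<^sup>2 * x\<^sup>2 + \<delta>\<^sup>2) / (2 * x)) else 0)"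

definition phi_inv :: "real \<Rightarrow> real \<Rightarrow> real" where
  "phi_inv \<sigma> z = 1 + z\<^sup>2 / (2 * \<sigma>\<^sup>2) + (z / \<sigma>) * sqrt (1 + z\<^sup>2 / (4 * \<sigma>\<^sup>2))"

definition gig_c :: "real \<Rightarrow> real \<Rightarrow> real \<Rightarrow> real" where
  "gig_c \<gamma> \<delta> p = sqrt (pi / 2) * (\<gamma> powr p / \<delta> powr (p + 1))
      * exp (- \<gamma> * \<delta>) / besselK p (\<gamma> * \<delta>)"

definition gauss_hermite :: "nat \<Rightarrow> (nat \<Rightarrow> real) \<Rightarrow> (nat \<Rightarrow> real) \<Rightarrow> bool" where
  "gauss_hermite n z h \<longleftrightarrow>
     inj_on z {..<n} \<and> (\<forall>k<n. poly (hermiteHe n) (z k) = 0) \<and>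
     (\<forall>q :: real poly. degree q \<le> 2 * n - 1 \<longrightarrow>
        (\<Sum>k<n. h k * poly q (z k)) = (\<integral>x. poly q x * std_normal_density x \<partial>lborel))"

end

theory Submission
  imports Defs
begin

lemma hermite_parity: "poly (hermiteHe n) (-x) = (-1)^n * poly (hermiteHe n) x"
proof (induction n rule: hermiteHe.induct)
  case (3 n)
  have "poly (hermiteHe (Suc (Suc n))) (-x) = (-x) * poly (hermiteHe (Suc n)) (-x) - real (Suc n) * poly (hermiteHe n) (-x)"
    by simp
  also have "\<dots> = (-1)^(Suc (Suc n)) * (x * poly (hermiteHe (Suc n)) x - real (Suc n) * poly (hermiteHe n) x)"
    unfolding 3 by (simp add: algebra_simps)
  finally show ?case by simp
qed simp_all

lemma hermite_deg: "degree (hermiteHe n) \<le> n \<and> coeff (hermiteHe n) n = 1"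
proof (induction n rule: hermiteHe.induct)
  case 1 then show ?case by simp
next
  case 2 then show ?case by simp
next
  case (3 n)
  have d1: "degree ([:0, 1:] * hermiteHe (Suc n)) \<le> Suc (Suc n)"
    using 3 by (simp add: degree_pCons_le)
  have d2: "degree (smult (real (Suc n)) (hermiteHe n)) \<le> Suc (Suc n)"
    using 3 by (meson degree_smult_le le_SucI order_trans)
  have "degree (hermiteHe (Suc (Suc n))) \<le> Suc (Suc n)"
    using d1 d2 by (simp add: degree_diff_le)
  moreover have "coeff (hermiteHe n) (Suc (Suc n)) = 0"
    using 3 by (intro coeff_eq_0) simp
  ultimately show ?case using 3 by simp
qed

lemma hermite_nz: "hermiteHe n \<noteq> 0"
  using hermite_deg[of n] by auto

lemma std_normal_sym: "std_normal_density (-x) = std_normal_density x"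
  by (simp add: normal_density_def)

lemma reflect_normal:
  "(\<integral>x. f (-x) * std_normal_density x \<partial>lborel) = (\<integral>x. f x * std_normal_density x \<partial>lborel)"
  using lborel_integral_real_affine[where c="-1" and t=0 and f="\<lambda>x. f x * std_normal_density x"]
  by (simp add: std_normal_sym)

lemma integrable_poly_normal: "integrable lborel (\<lambda>x. poly q x * std_normal_density x)"
proof -
  have "integrable lborel (\<lambda>x. \<Sum>i\<le>degree q. coeff q i * (std_normal_density x * x ^ i))"
    by (auto intro!: integrable_std_normal_moment)
  moreover have "\<And>x. poly q x * std_normal_density x = (\<Sum>i\<le>degree q. coeff q i * (std_normal_density x * x ^ i))"
    by (simp add: poly_altdef sum_distrib_left algebra_simps)
  ultimately show ?thesis by simp
qed

lemma gh_roots: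
  assumes gh: "gauss_hermite n z h"
  shows "z ` {..<n} = {x. poly (hermiteHe n) x = 0}"
proof -
  let ?R = "{x. poly (hermiteHe n) x = 0}"
  have inj: "inj_on z {..<n}" and rt: "\<forall>k<n. poly (hermiteHe n) (z k) = 0"
    using gh unfolding gauss_hermite_def by auto
  have fin: "finite ?R" using poly_roots_finite[OF hermite_nz] .
  have sub: "z ` {..<n} \<subseteq> ?R" using rt by auto
  have "card ?R \<le> n" using card_poly_roots_bound[OF hermite_nz[of n]] hermite_deg[of n] by linarith
  moreover have "card (z ` {..<n}) = n" using card_image[OF inj] by simp
  moreover have "card (z ` {..<n}) \<le> card ?R" using card_mono[OF fin sub] .
  ultimately have "card (z ` {..<n}) = card ?R" by linarith
  then show ?thesis using card_subset_eq[OF fin sub] by simp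
qed

lemma gh_neg_node:
  assumes gh: "gauss_hermite n z h" and k: "k < n"
  shows "\<exists>i<n. z i = - z k"
proof -
  have "poly (hermiteHe n) (z k) = 0" using gh k unfolding gauss_hermite_def by auto
  then have "poly (hermiteHe n) (- z k) = 0" by (simp add: hermite_parity)
  then have "- z k \<in> z ` {..<n}" using gh_roots[OF gh] by auto
  then show ?thesis by force
qed

lemma gh_interp:
  assumes gh: "gauss_hermite n z h" and n: "n \<ge> 1"
  shows "\<exists>M. degree M \<le> n - 1 \<and> (\<forall>i<n. poly M (z i) = v (z i))"
proof -
  have inj: "inj_on z {..<n}" using gh unfolding gauss_hermite_def by auto
  define L where "L k = (\<Prod>i\<in>{..<n}-{k}. [:- z i, 1:])" for k
  define M where "M = (\<Sum>k<n. smult (v (z k) / poly (L k) (z k)) (L k))"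
  have degL: "degree (L k) \<le> n - 1" if "k < n" for k
  proof -
    have "degree (L k) \<le> sum (degree \<circ> (\<lambda>i. [:- z i, 1:])) ({..<n}-{k})"
      unfolding L_def by (rule degree_prod_sum_le) simp
    also have "\<dots> = card ({..<n}-{k})" by simp
    also have "\<dots> = n - 1" using that by simp
    finally show ?thesis .
  qed
  have "degree M \<le> n - 1"
    unfolding M_def
  proof (rule degree_sum_le)
    fix k assume "k \<in> {..<n}"
    then show "degree (smult (v (z k) / poly (L k) (z k)) (L k)) \<le> n - 1"
      by (intro order_trans[OF degree_smult_le degL]) simp
  qed simp
  moreover have "poly M (z i) = v (z i)" if i: "i < n" for i
  proof -
    have Lz: "poly (L k) (z i) = (if k = i then poly (L i) (z i) else 0)" if "k < n" for k
    proof (cases "k = i")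
      case False
      then have "i \<in> {..<n}-{k}" using i by auto
      then show ?thesis using False unfolding L_def poly_prod
        by (auto intro: prod_zero)
    qed simp
    have nz: "poly (L i) (z i) \<noteq> 0"
      unfolding L_def poly_prod using inj i
      by (auto simp: inj_on_def)
    have "poly M (z i) = (\<Sum>k<n. v (z k) / poly (L k) (z k) * poly (L k) (z i))"
      unfolding M_def by (simp add: poly_sum)
    also have "\<dots> = (\<Sum>k<n. if k = i then v (z i) else 0)"
    proof (rule sum.cong)
      fix k assume "k \<in> {..<n}"
      then show "v (z k) / poly (L k) (z k) * poly (L k) (z i) = (if k = i then v (z i) else 0)"
        using nz Lz[of k] by (cases "k = i") simp_all
    qed simp
    also have "\<dots> = v (z i)" using i by simp
    finally show ?thesis .
  qed
  ultimately show ?thesis by blast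
qed

lemma gh_sym:
  assumes gh: "gauss_hermite n z h" and n: "n \<ge> 1"
  shows "(\<Sum>k<n. h k * v (- z k)) = (\<Sum>k<n. h k * v (z k))"
proof -
  obtain M where degM: "degree M \<le> n - 1" and M: "\<forall>i<n. poly M (z i) = v (z i)"
    using gh_interp[OF gh n] by blast
  have ex: "\<forall>q :: real poly. degree q \<le> 2 * n - 1 \<longrightarrow>
        (\<Sum>k<n. h k * poly q (z k)) = (\<integral>x. poly q x * std_normal_density x \<partial>lborel)"
    using gh unfolding gauss_hermite_def by auto
  let ?N = "pcompose M [:0, -1:]"
  have degN: "degree ?N \<le> n - 1" using degM by (simp add: degree_pcompose)
  have "(\<Sum>k<n. h k * v (- z k)) = (\<Sum>k<n. h k * poly ?N (z k))"
  proof (rule sum.cong)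
    fix k assume "k \<in> {..<n}"
    then obtain i where "i < n" "z i = - z k" using gh_neg_node[OF gh] by blast
    then show "h k * v (- z k) = h k * poly ?N (z k)"
      using M by (simp add: poly_pcompose) (metis)
  qed simp
  also have "\<dots> = (\<integral>x. poly ?N x * std_normal_density x \<partial>lborel)"
    using ex degN by auto
  also have "\<dots> = (\<integral>x. poly M (-x) * std_normal_density x \<partial>lborel)"
    by (simp add: poly_pcompose)
  also have "\<dots> = (\<integral>x. poly M x * std_normal_density x \<partial>lborel)"
    by (rule reflect_normal)
  also have "\<dots> = (\<Sum>k<n. h k * poly M (z k))"
    using ex degM by auto
  also have "\<dots> = (\<Sum>k<n. h k * v (z k))"
    using M by simp
  finally show ?thesis .
qed

definition sfun :: "real \<Rightarrow> real \<Rightarrow> real" where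
  "sfun \<sigma> z = z / (2 * \<sigma>) + sqrt (1 + (z / (2 * \<sigma>))\<^sup>2)"

lemma sqrt_gt_abs: "\<bar>u\<bar> < sqrt (1 + u\<^sup>2)"
  by (rule real_less_rsqrt) simp

lemma sfun_pos: "sfun \<sigma> z > 0"
  unfolding sfun_def using sqrt_gt_abs[of "z / (2 * \<sigma>)"] by linarith

lemma sfun_minus: "sfun \<sigma> (-z) = - (z / (2 * \<sigma>)) + sqrt (1 + (z / (2 * \<sigma>))\<^sup>2)"
  unfolding sfun_def by simp

lemma sfun_neg: "sfun \<sigma> (-z) * sfun \<sigma> z = 1"
proof -
  define u where "u = z / (2 * \<sigma>)"
  have "sfun \<sigma> (-z) * sfun \<sigma> z = (sqrt (1 + u\<^sup>2))\<^sup>2 - u\<^sup>2"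
    unfolding sfun_minus unfolding sfun_def u_def[symmetric] by (simp add: algebra_simps power2_eq_square)
  also have "\<dots> = 1" by simp
  finally show ?thesis .
qed

lemma sfun_neg': "sfun \<sigma> (-z) = 1 / sfun \<sigma> z"
  using sfun_neg[of \<sigma> z] sfun_pos[of \<sigma> z] by (simp add: field_simps)

lemma sfun_diff: "\<sigma> \<noteq> 0 \<Longrightarrow> z = \<sigma> * (sfun \<sigma> z - 1 / sfun \<sigma> z)"
proof -
  assume s: "\<sigma> \<noteq> 0"
  have "sfun \<sigma> z - 1 / sfun \<sigma> z = 2 * (z / (2 * \<sigma>))"
    unfolding sfun_neg'[symmetric] sfun_minus unfolding sfun_def by simp
  then show ?thesis using s by simp
qed

lemma sfun_sum: "sfun \<sigma> z + 1 / sfun \<sigma> z = 2 * sqrt (1 + (z / (2 * \<sigma>))\<^sup>2)"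
  unfolding sfun_neg'[symmetric] sfun_minus unfolding sfun_def by simp

lemma phi_inv_sfun: "\<sigma> > 0 \<Longrightarrow> phi_inv \<sigma> z = (sfun \<sigma> z)\<^sup>2"
proof -
  assume s: "\<sigma> > 0"
  define u where "u = z / (2 * \<sigma>)"
  have "(sfun \<sigma> z)\<^sup>2 = 1 + 2 * u\<^sup>2 + 2 * u * sqrt (1 + u\<^sup>2)"
    unfolding sfun_def u_def[symmetric] by (simp add: power2_eq_square algebra_simps)
  moreover have "z\<^sup>2 / (2 * \<sigma>\<^sup>2) = 2 * u\<^sup>2" "z / \<sigma> = 2 * u" "z\<^sup>2 / (4 * \<sigma>\<^sup>2) = u\<^sup>2"
    using s unfolding u_def by (simp_all add: power_divide power_mult_distrib)
  ultimately show ?thesis unfolding phi_inv_def by simp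
qed

fun Qp :: "real \<Rightarrow> nat \<Rightarrow> real poly" where
  "Qp c 0 = 1"
| "Qp c (Suc 0) = [:1, 0, c:]"
| "Qp c (Suc (Suc k)) = [:2, 0, c:] * Qp c (Suc k) - Qp c k"

lemma Qp_deg: "degree (Qp c k) \<le> 2 * k"
proof (induction c k rule: Qp.induct)
  case (3 c k)
  have "degree ([:2, 0, c:] * Qp c (Suc k)) \<le> 2 + 2 * Suc k"
    by (rule order_trans[OF degree_mult_le]) (use 3 in auto)
  moreover have "degree (Qp c k) \<le> 2 * Suc (Suc k)" using 3 by simp
  ultimately show ?case by (simp add: degree_diff_le)
qed auto

lemma Qp_eval:
  assumes s: "s > 0" and w: "c * z\<^sup>2 = (s - 1 / s)\<^sup>2"
  shows "poly (Qp c k) z * (s + 1 / s) = s ^ (2 * k + 1) + 1 / s ^ (2 * k + 1)"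
  using w
proof (induction c k rule: Qp.induct)
  case (1 c)
  then show ?case by simp
next
  case (2 c)
  have "poly (Qp c (Suc 0)) z = 1 + c * z\<^sup>2" by (simp add: power2_eq_square algebra_simps)
  also have "\<dots> = s\<^sup>2 - 1 + 1 / s\<^sup>2" using 2 s by (simp add: power2_eq_square field_simps)
  finally have eq: "poly (Qp c (Suc 0)) z = s\<^sup>2 - 1 + 1 / s\<^sup>2" .
  show ?case unfolding eq using s by (simp add: power2_eq_square field_simps)
next
  case (3 c k)
  have w2: "2 + c * z\<^sup>2 = s\<^sup>2 + 1 / s\<^sup>2" using 3(3) s by (simp add: power2_eq_square field_simps)
  define t where "t = s ^ (2 * k + 1)"
  have t: "t > 0" using s by (simp add: t_def)
  have e1: "s ^ (2 * Suc k + 1) = t * s\<^sup>2" by (simp add: t_def power2_eq_square)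
  have e2: "s ^ (2 * Suc (Suc k) + 1) = t * s\<^sup>2 * s\<^sup>2" by (simp add: t_def power2_eq_square)
  have IH1: "poly (Qp c (Suc k)) z * (s + 1 / s) = t * s\<^sup>2 + 1 / (t * s\<^sup>2)"
    using 3(1) 3(3) e1 by simp
  have IH0: "poly (Qp c k) z * (s + 1 / s) = t + 1 / t"
    using 3(2) 3(3) by (simp add: t_def)
  have "poly (Qp c (Suc (Suc k))) z * (s + 1 / s) =
      (2 + c * z\<^sup>2) * (poly (Qp c (Suc k)) z * (s + 1 / s)) - poly (Qp c k) z * (s + 1 / s)"
    by (simp add: algebra_simps power2_eq_square)
  also have "\<dots> = (s\<^sup>2 + 1 / s\<^sup>2) * (t * s\<^sup>2 + 1 / (t * s\<^sup>2)) - (t + 1 / t)"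
    by (simp only: w2 IH1 IH0)
  also have "\<dots> = t * s\<^sup>2 * s\<^sup>2 + 1 / (t * s\<^sup>2 * s\<^sup>2)"
    using s t by (simp add: field_simps power2_eq_square)
  finally show ?case unfolding e2 .
qed

definition Ef :: "real \<Rightarrow> int \<Rightarrow> real \<Rightarrow> real" where
  "Ef \<sigma> j z = sfun \<sigma> z powr (2 * of_int j) / (1 + (sfun \<sigma> z)\<^sup>2)"

lemma Ef_nonneg: "Ef \<sigma> j z \<ge> 0"
  unfolding Ef_def by simp

lemma powr_plus1: "(s::real) > 0 \<Longrightarrow> s powr (x + 1) = s powr x * s"
  by (simp add: powr_add)

lemma aux_div1: "(s::real) > 0 \<Longrightarrow> A / (1 + (1 / s)\<^sup>2) = A * s\<^sup>2 / (1 + s\<^sup>2)"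
  by (simp add: field_simps power2_eq_square)

lemma aux_div2: "(s::real) > 0 \<Longrightarrow> (A + B) / (s + 1 / s) = (A * s + B * s) / (1 + s\<^sup>2)"
  by (simp add: field_simps power2_eq_square)

lemma Ef_sym_eq:
  fixes s m X :: real
  assumes s: "s > 0" and m: "m = X - 1 \<or> m = 1 - X"
  shows "s powr X / (1 + s\<^sup>2) + (1 / s) powr X / (1 + (1 / s)\<^sup>2)
       = (s powr m + s powr (- m)) / (s + 1 / s)"
proof -
  have a: "(1 / s) powr X = s powr (- X)"
    using s by (simp add: powr_divide powr_minus_divide)
  have b: "s powr (- X) * s\<^sup>2 = s powr (2 - X)"
  proof -
    have "s powr (2 - X) = s powr (- X) * s powr 2"
      by (simp add: powr_add[symmetric])
    then show ?thesis using s by (simp add: powr_numeral)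
  qed
  have c: "s powr m * s = s powr (m + 1)" "s powr (- m) * s = s powr (- m + 1)"
    by (rule powr_plus1[OF s, symmetric])+
  have d: "s powr (m + 1) + s powr (- m + 1) = s powr X + s powr (2 - X)"
    using m
  proof
    assume "m = X - 1"
    then have e: "m + 1 = X" "- m + 1 = 2 - X" by simp_all
    show ?thesis unfolding e ..
  next
    assume "m = 1 - X"
    then have e: "m + 1 = 2 - X" "- m + 1 = X" by simp_all
    show ?thesis unfolding e by simp
  qed
  show ?thesis
    unfolding a aux_div1[OF s] aux_div2[OF s] b c d by (simp add: add_divide_distrib)
qed

lemma Ef_pair:
  assumes \<sigma>: "\<sigma> > 0" and j: "1 - int n \<le> j" "j \<le> int n"
  shows "\<exists>q. degree q \<le> 2 * n - 1 \<and> (\<forall>x. poly q x = Ef \<sigma> j x + Ef \<sigma> j (- x))"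
proof -
  define k where "k = nat (if j \<ge> 1 then j - 1 else - j)"
  have kn: "k \<le> n - 1" using j unfolding k_def by auto
  have km: "real (2 * k + 1) = 2 * of_int j - 1 \<or> real (2 * k + 1) = 1 - 2 * (of_int j :: real)"
    unfolding k_def by auto
  define q where "q = Qp (1 / \<sigma>\<^sup>2) k"
  have "degree q \<le> 2 * k" unfolding q_def by (rule Qp_deg)
  then have dq: "degree q \<le> 2 * n - 1" using kn by linarith
  have "poly q x = Ef \<sigma> j x + Ef \<sigma> j (- x)" for x
  proof -
    define s where "s = sfun \<sigma> x"
    have s: "s > 0" unfolding s_def by (rule sfun_pos)
    have xs: "x = \<sigma> * (s - 1 / s)" unfolding s_def using sfun_diff \<sigma> by simp
    have w: "1 / \<sigma>\<^sup>2 * x\<^sup>2 = (s - 1 / s)\<^sup>2" using \<sigma> unfolding xs by (simp add: power_mult_distrib)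
    have sp: "s + 1 / s > 0" using s by (intro add_pos_pos) simp_all
    have "poly q x = (s ^ (2 * k + 1) + 1 / s ^ (2 * k + 1)) / (s + 1 / s)"
      using Qp_eval[OF s w, of k] sp unfolding q_def by (simp add: field_simps)
    also have "\<dots> = (s powr real (2 * k + 1) + s powr (- real (2 * k + 1))) / (s + 1 / s)"
      unfolding powr_minus_divide powr_realpow[OF s] ..
    also have "\<dots> = Ef \<sigma> j x + Ef \<sigma> j (- x)"
      unfolding Ef_def sfun_neg' s_def[symmetric] using Ef_sym_eq[OF s km] by simp
    finally show ?thesis .
  qed
  then show ?thesis using dq by blast
qed

lemma sfun_cont: "\<sigma> > 0 \<Longrightarrow> continuous_on UNIV (sfun \<sigma>)"
  unfolding sfun_def by (intro continuous_intros) auto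

lemma Ef_cont: "\<sigma> > 0 \<Longrightarrow> continuous_on UNIV (Ef \<sigma> j)"
proof -
  assume \<sigma>: "\<sigma> > 0"
  have a: "sfun \<sigma> x \<noteq> 0" for x using sfun_pos[of \<sigma> x] by simp
  have b: "1 + (sfun \<sigma> x)\<^sup>2 \<noteq> 0" for x using sfun_pos[of \<sigma> x]
    by (metis add_pos_nonneg zero_less_one zero_le_power2 less_irrefl)
  have "continuous_on UNIV (\<lambda>z. sfun \<sigma> z powr (2 * of_int j) / (1 + (sfun \<sigma> z)\<^sup>2))"
    by (intro continuous_intros sfun_cont[OF \<sigma>]) (simp_all add: a b)
  then show ?thesis unfolding Ef_def[abs_def] .
qed

lemma quad_E:
  assumes gh: "gauss_hermite n z h" and n: "n \<ge> 1" and \<sigma>: "\<sigma> > 0"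
    and j: "1 - int n \<le> j" "j \<le> int n"
  shows "integrable lborel (\<lambda>x. Ef \<sigma> j x * std_normal_density x)"
    and "(\<Sum>k<n. h k * Ef \<sigma> j (z k)) = (\<integral>x. Ef \<sigma> j x * std_normal_density x \<partial>lborel)"
proof -
  obtain q where dq: "degree q \<le> 2 * n - 1" and q: "\<And>x. poly q x = Ef \<sigma> j x + Ef \<sigma> j (- x)"
    using Ef_pair[OF \<sigma> j] by blast
  have ex: "(\<Sum>k<n. h k * poly q (z k)) = (\<integral>x. poly q x * std_normal_density x \<partial>lborel)"
    using gh dq unfolding gauss_hermite_def by auto
  have mE: "Ef \<sigma> j \<in> borel_measurable borel"
    by (rule borel_measurable_continuous_onI[OF Ef_cont[OF \<sigma>]])
  have mE': "(\<lambda>x. Ef \<sigma> j (- x)) \<in> borel_measurable borel"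
    using mE by measurable
  have iE: "integrable lborel (\<lambda>x. Ef \<sigma> j x * std_normal_density x)"
  proof (rule Bochner_Integration.integrable_bound[OF integrable_poly_normal[of q]])
    show "(\<lambda>x. Ef \<sigma> j x * std_normal_density x) \<in> borel_measurable lborel"
      using mE by measurable
    show "AE x in lborel. norm (Ef \<sigma> j x * std_normal_density x) \<le> norm (poly q x * std_normal_density x)"
      using Ef_nonneg[of \<sigma> j] by (auto simp: q abs_mult intro!: mult_right_mono)
  qed
  have iE': "integrable lborel (\<lambda>x. Ef \<sigma> j (- x) * std_normal_density x)"
  proof (rule Bochner_Integration.integrable_bound[OF integrable_poly_normal[of q]])
    show "(\<lambda>x. Ef \<sigma> j (- x) * std_normal_density x) \<in> borel_measurable lborel"
      using mE' by measurable
    show "AE x in lborel. norm (Ef \<sigma> j (- x) * std_normal_density x) \<le> norm (poly q x * std_normal_density x)"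
      using Ef_nonneg[of \<sigma> j] by (auto simp: q abs_mult intro!: mult_right_mono)
  qed
  show "integrable lborel (\<lambda>x. Ef \<sigma> j x * std_normal_density x)" by (rule iE)
  have "(\<integral>x. poly q x * std_normal_density x \<partial>lborel)
      = (\<integral>x. Ef \<sigma> j x * std_normal_density x + Ef \<sigma> j (- x) * std_normal_density x \<partial>lborel)"
    by (simp add: q algebra_simps)
  also have "\<dots> = (\<integral>x. Ef \<sigma> j x * std_normal_density x \<partial>lborel) + (\<integral>x. Ef \<sigma> j (- x) * std_normal_density x \<partial>lborel)"
    by (rule Bochner_Integration.integral_add[OF iE iE'])
  also have "(\<integral>x. Ef \<sigma> j (- x) * std_normal_density x \<partial>lborel) = (\<integral>x. Ef \<sigma> j x * std_normal_density x \<partial>lborel)"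
    by (rule reflect_normal)
  finally have I: "(\<integral>x. poly q x * std_normal_density x \<partial>lborel) = 2 * (\<integral>x. Ef \<sigma> j x * std_normal_density x \<partial>lborel)"
    by simp
  have "(\<Sum>k<n. h k * poly q (z k)) = (\<Sum>k<n. h k * Ef \<sigma> j (z k)) + (\<Sum>k<n. h k * Ef \<sigma> j (- z k))"
    by (simp add: q algebra_simps sum.distrib)
  also have "(\<Sum>k<n. h k * Ef \<sigma> j (- z k)) = (\<Sum>k<n. h k * Ef \<sigma> j (z k))"
    by (rule gh_sym[OF gh n])
  finally show "(\<Sum>k<n. h k * Ef \<sigma> j (z k)) = (\<integral>x. Ef \<sigma> j x * std_normal_density x \<partial>lborel)"
    using ex I by simp
qed

lemma besselK_nonneg: "besselK p x \<ge> 0"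
  unfolding besselK_def set_lebesgue_integral_def
  by (rule integral_nonneg_AE) (auto simp: indicator_def intro!: mult_nonneg_nonneg)

lemma gig_density_nonneg: "gig_density \<gamma> \<delta> p y \<ge> 0"
  unfolding gig_density_def using besselK_nonneg[of p "\<gamma> * \<delta>"] by auto

lemma key_alg:
  fixes \<gamma> \<delta> p s z :: real and j :: int
  assumes g: "\<gamma> > 0" and d: "\<delta> > 0" and s: "s > 0"
    and z: "z = sqrt (\<gamma> * \<delta>) * (s - 1 / s)"
  shows "((\<delta> / \<gamma>) * s\<^sup>2) powr (of_int j - (p + 1/2)) * gig_density \<gamma> \<delta> p ((\<delta> / \<gamma>) * s\<^sup>2)
           * ((\<delta> / \<gamma>) * s\<^sup>2 / (sqrt (\<gamma> * \<delta>) * ((s + 1 / s) / 2)))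
       = gig_c \<gamma> \<delta> p * (\<delta> / \<gamma>) powr (of_int j) * 2
           * (s powr (2 * of_int j) / (1 + s\<^sup>2) * std_normal_density z)"
proof (cases "besselK p (\<gamma> * \<delta>) = 0")
  case True
  then show ?thesis by (simp add: gig_density_def gig_c_def)
next
  case False
  define a where "a = \<delta> / \<gamma>"
  define \<sigma> where "\<sigma> = sqrt (\<gamma> * \<delta>)"
  define K where "K = besselK p (\<gamma> * \<delta>)"
  define y where "y = a * s\<^sup>2"
  define G where "G = (\<gamma> / \<delta>) powr p"
  define A where "A = a powr (of_int j)"
  define S where "S = s powr (2 * of_int j)"
  define X where "X = exp (- (z\<^sup>2 / 2))"
  define Y where "Y = exp (- (\<gamma> * \<delta>))"
  have K: "K \<noteq> 0" using False unfolding K_def .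
  have a: "a > 0" using g d unfolding a_def by simp
  have \<sigma>: "\<sigma> > 0" using g d unfolding \<sigma>_def by simp
  have y: "y > 0" using a s unfolding y_def by simp
  have sa: "sqrt a * \<sigma> = \<delta>"
    unfolding a_def \<sigma>_def using g d by (simp add: real_sqrt_mult[symmetric])
  have e1: "- (\<gamma>\<^sup>2 * y\<^sup>2 + \<delta>\<^sup>2) / (2 * y) = - (z\<^sup>2 / 2) - \<gamma> * \<delta>"
  proof -
    have zz: "z\<^sup>2 = \<gamma> * \<delta> * (s - 1 / s)\<^sup>2" using g d unfolding z by (simp add: power_mult_distrib)
    have q: "(s - 1 / s)\<^sup>2 / 2 + 1 = (s ^ 4 + 1) / (2 * s\<^sup>2)"
      using s by (simp add: field_simps power2_eq_square power4_eq_xxxx)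
    have "z\<^sup>2 / 2 + \<gamma> * \<delta> = \<gamma> * \<delta> * ((s - 1 / s)\<^sup>2 / 2 + 1)"
      unfolding zz by (simp add: algebra_simps)
    then have z2: "z\<^sup>2 / 2 + \<gamma> * \<delta> = \<gamma> * \<delta> * ((s ^ 4 + 1) / (2 * s\<^sup>2))"
      unfolding q .
    have l: "(\<gamma>\<^sup>2 * y\<^sup>2 + \<delta>\<^sup>2) / (2 * y) = \<gamma> * \<delta> * ((s ^ 4 + 1) / (2 * s\<^sup>2))"
      unfolding y_def a_def using g d s by (simp add: field_simps power2_eq_square power4_eq_xxxx)
    have "- (\<gamma>\<^sup>2 * y\<^sup>2 + \<delta>\<^sup>2) / (2 * y) = - ((\<gamma>\<^sup>2 * y\<^sup>2 + \<delta>\<^sup>2) / (2 * y))" by (rule minus_divide_left[symmetric])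
    then show ?thesis using l z2 by linarith
  qed
  have e2: "y powr (of_int j - (p + 1/2)) * y powr (p - 1) = A * S / (a * s\<^sup>2 * (sqrt a * s))"
  proof -
    have "y powr (of_int j - (p + 1/2)) * y powr (p - 1) = y powr (of_int j) * y powr (- 3/2)"
      by (simp add: powr_add[symmetric])
    also have "y powr (- 3/2) = 1 / (y * sqrt y)"
    proof -
      have "y powr (3/2) = y powr (1 + 1/2)" by simp
      also have "\<dots> = y powr 1 * y powr (1/2)" by (rule powr_add)
      also have "\<dots> = y * sqrt y" using y by (simp add: powr_half_sqrt)
      finally have "y powr (3/2) = y * sqrt y" .
      then show ?thesis by (simp add: powr_minus_divide)
    qed
    also have "y powr (of_int j) = A * S"
    proof -
      have s2: "s\<^sup>2 = s powr 2" using s by (simp add: powr_numeral)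
      have "y powr (of_int j) = a powr (of_int j) * (s powr 2) powr (of_int j)"
        unfolding y_def s2 using a s by (simp add: powr_mult)
      also have "(s powr 2) powr (of_int j) = s powr (2 * of_int j)" by (rule powr_powr)
      finally show ?thesis unfolding A_def S_def .
    qed
    also have "sqrt y = sqrt a * s" unfolding y_def using s by (simp add: real_sqrt_mult)
    finally show ?thesis unfolding y_def by simp
  qed
  have dens: "gig_density \<gamma> \<delta> p y = G * y powr (p - 1) / (2 * K) * (X * Y)"
  proof -
    have "gig_density \<gamma> \<delta> p y = G * y powr (p - 1) / (2 * K) * exp (- (\<gamma>\<^sup>2 * y\<^sup>2 + \<delta>\<^sup>2) / (2 * y))"
      unfolding gig_density_def G_def K_def using y by simp
    also have "exp (- (\<gamma>\<^sup>2 * y\<^sup>2 + \<delta>\<^sup>2) / (2 * y)) = X * Y"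
      unfolding e1 X_def Y_def by (subst exp_add[symmetric]) simp
    finally show ?thesis .
  qed
  have gc: "gig_c \<gamma> \<delta> p = sqrt (pi / 2) * (G / \<delta>) * Y / K"
    unfolding gig_c_def G_def Y_def K_def using g d
    by (simp add: powr_divide powr_add)
  have nd: "std_normal_density z = X / sqrt (2 * pi)"
    unfolding X_def by (simp add: normal_density_def)
  have pi: "sqrt (pi / 2) * 2 = sqrt (2 * pi)"
  proof -
    have "sqrt (pi / 2) * 2 = sqrt (pi / 2) * sqrt (2\<^sup>2)" by simp
    also have "\<dots> = sqrt (pi / 2 * 2\<^sup>2)" by (rule real_sqrt_mult[symmetric])
    also have "\<dots> = sqrt (2 * pi)" by simp
    finally show ?thesis .
  qed
  have lhs: "y powr (of_int j - (p + 1/2)) * gig_density \<gamma> \<delta> p y * (y / (\<sigma> * ((s + 1 / s) / 2)))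
      = G * (A * S) * (X * Y) / (K * (sqrt a * \<sigma>) * (1 + s\<^sup>2))"
  proof -
    have "y powr (of_int j - (p + 1/2)) * gig_density \<gamma> \<delta> p y * (y / (\<sigma> * ((s + 1 / s) / 2)))
        = G / (2 * K) * (y powr (of_int j - (p + 1/2)) * y powr (p - 1)) * (X * Y) * (y / (\<sigma> * ((s + 1 / s) / 2)))"
      unfolding dens by (simp add: algebra_simps)
    also have "\<dots> = G / (2 * K) * (A * S / (a * s\<^sup>2 * (sqrt a * s))) * (X * Y) * (y / (\<sigma> * ((s + 1 / s) / 2)))"
      unfolding e2 ..
    also have "\<dots> = G * (A * S) * (X * Y) / (K * (sqrt a * \<sigma>) * (1 + s\<^sup>2))"
    proof -
      define T where "T = 1 + s\<^sup>2"
      have ss: "s + 1 / s = T / s" unfolding T_def using s by (simp add: field_simps power2_eq_square)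
      have n1: "T \<noteq> 0" unfolding T_def by (metis add_pos_nonneg zero_less_one zero_le_power2 less_irrefl)
      have n2: "sqrt a \<noteq> 0" using a by simp
      show ?thesis unfolding y_def ss T_def[symmetric] using a s \<sigma> K n1 n2 by (simp add: field_simps power2_eq_square)
    qed
    finally show ?thesis .
  qed
  have rhs: "gig_c \<gamma> \<delta> p * A * 2 * (S / (1 + s\<^sup>2) * std_normal_density z)
      = G * (A * S) * (X * Y) / (K * \<delta> * (1 + s\<^sup>2))"
  proof -
    have "gig_c \<gamma> \<delta> p * A * 2 * (S / (1 + s\<^sup>2) * std_normal_density z)
        = (sqrt (pi / 2) * 2) * (G / \<delta>) * Y / K * A * (S / (1 + s\<^sup>2) * (X / sqrt (2 * pi)))"
      unfolding gc nd by (simp add: algebra_simps)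
    also have "\<dots> = G * (A * S) * (X * Y) / (K * \<delta> * (1 + s\<^sup>2))"
    proof -
      define T where "T = 1 + s\<^sup>2"
      have n1: "T \<noteq> 0" unfolding T_def by (metis add_pos_nonneg zero_less_one zero_le_power2 less_irrefl)
      have n3: "sqrt (2 * pi) \<noteq> 0" by simp
      show ?thesis unfolding pi T_def[symmetric] using K d n1 n3 by (simp add: field_simps)
    qed
    finally show ?thesis .
  qed
  show ?thesis
    using lhs rhs unfolding sa y_def a_def[symmetric] \<sigma>_def[symmetric] A_def S_def by simp
qed

lemma sfun_deriv:
  assumes \<sigma>: "\<sigma> > 0"
  shows "DERIV (sfun \<sigma>) z :> sfun \<sigma> z / (2 * \<sigma> * sqrt (1 + (z / (2 * \<sigma>))\<^sup>2))"
proof -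
  define c where "c = sqrt (1 + (z / (2 * \<sigma>))\<^sup>2)"
  have c: "c > 0" unfolding c_def by (simp add: add_pos_nonneg)
  have p: "1 + (z / (2 * \<sigma>))\<^sup>2 > 0" by (simp add: add_pos_nonneg)
  show ?thesis
    unfolding sfun_def[abs_def]
    using \<sigma> c p
    by (auto intro!: derivative_eq_intros simp: c_def[symmetric] field_simps)
       (simp_all add: eval_nat_numeral algebra_simps)
qed

lemma sfun_isCont: "\<sigma> > 0 \<Longrightarrow> isCont (sfun \<sigma>) z"
  unfolding sfun_def[abs_def] by (intro continuous_intros) auto

lemma sfun_at_top: "\<sigma> > 0 \<Longrightarrow> filterlim (sfun \<sigma>) at_top at_top"
proof -
  assume \<sigma>: "\<sigma> > 0"
  have "filterlim (\<lambda>z. (1 / (2 * \<sigma>)) * z) at_top at_top"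
    by (rule filterlim_tendsto_pos_mult_at_top[OF tendsto_const _ filterlim_ident]) (use \<sigma> in simp)
  moreover have "\<forall>\<^sub>F z in at_top. (1 / (2 * \<sigma>)) * z \<le> sfun \<sigma> z"
    unfolding sfun_def by (intro always_eventually allI) simp
  ultimately show ?thesis by (rule filterlim_at_top_mono)
qed

lemma sfun_at_bot: "\<sigma> > 0 \<Longrightarrow> (sfun \<sigma> \<longlongrightarrow> 0) at_bot"
proof -
  assume \<sigma>: "\<sigma> > 0"
  have "filterlim (\<lambda>z. sfun \<sigma> (- z)) at_top at_bot"
    by (rule filterlim_compose[OF sfun_at_top[OF \<sigma>] filterlim_uminus_at_top_at_bot])
  then have "((\<lambda>z. inverse (sfun \<sigma> (- z))) \<longlongrightarrow> 0) at_bot"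
    by (rule tendsto_inverse_0_at_top)
  moreover have "inverse (sfun \<sigma> (- z)) = sfun \<sigma> z" for z
    using sfun_neg[of \<sigma> z] sfun_pos[of \<sigma> z] sfun_pos[of \<sigma> "- z"] by (simp add: field_simps)
  ultimately show ?thesis by simp
qed

lemma powr_as2: "(a::real) > 0 \<Longrightarrow> s > 0 \<Longrightarrow> (a * s\<^sup>2) powr x = a powr x * s powr (2 * x)"
proof -
  assume a: "a > 0" and s: "s > 0"
  have s2: "s\<^sup>2 = s powr 2" using s by (simp add: powr_numeral)
  have "(a * s\<^sup>2) powr x = a powr x * (s powr 2) powr x"
    unfolding s2 using a s by (simp add: powr_mult)
  also have "(s powr 2) powr x = s powr (2 * x)" by (rule powr_powr)
  finally show ?thesis .
qed

lemma f_isCont: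
  assumes y0: "y0 > 0"
  shows "isCont (\<lambda>y. y powr r * gig_density \<gamma> \<delta> p y) y0"
proof -
  define C0 where "C0 = (\<gamma> / \<delta>) powr p / (2 * besselK p (\<gamma> * \<delta>))"
  have ev: "\<forall>\<^sub>F y in nhds y0. y powr r * gig_density \<gamma> \<delta> p y
      = y powr r * (C0 * y powr (p - 1) * exp (- (\<gamma>\<^sup>2 * y\<^sup>2 + \<delta>\<^sup>2) / (2 * y)))"
  proof -
    have "\<forall>\<^sub>F y in nhds y0. y \<in> {0<..}"
      by (rule eventually_nhds_in_open) (use y0 in auto)
    then show ?thesis
      by eventually_elim (simp add: gig_density_def C0_def)
  qed
  have "isCont (\<lambda>y. y powr r * (C0 * y powr (p - 1) * exp (- (\<gamma>\<^sup>2 * y\<^sup>2 + \<delta>\<^sup>2) / (2 * y)))) y0"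
    using y0 by (intro continuous_intros) auto
  then show ?thesis using isCont_cong[OF ev] by simp
qed

theorem corollary1:
  fixes \<gamma> \<delta> p :: real and n :: nat and z h :: "nat \<Rightarrow> real"
  assumes "\<gamma> > 0" and "\<delta> > 0" and "n \<ge> 1"
    and "gauss_hermite n z h"
  defines "\<sigma> \<equiv> sqrt (\<gamma> * \<delta>)"
  defines "x \<equiv> (\<lambda>k. (\<delta> / \<gamma>) * phi_inv \<sigma> (z k))"
  defines "w \<equiv> (\<lambda>k. 2 * h k / (1 + phi_inv \<sigma> (z k)))"
  defines "wbar \<equiv> (\<lambda>k. gig_c \<gamma> \<delta> p * x k powr (p + 1/2) * w k)"
  shows "\<forall>j::int. 1 - int n \<le> j \<and> j \<le> int n \<longrightarrow>
           (let r = real_of_int j - (p + 1/2) in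
              set_integrable lborel {0<..} (\<lambda>y. y powr r * gig_density \<gamma> \<delta> p y) \<and>
              (LBINT y:{0<..}. y powr r * gig_density \<gamma> \<delta> p y) = (\<Sum>k<n. x k powr r * wbar k))"
proof (intro allI impI)
  fix j :: int
  assume jr: "1 - int n \<le> j \<and> j \<le> int n"
  then have j1: "1 - int n \<le> j" and j2: "j \<le> int n" by auto
  have g: "\<gamma> > 0" and d: "\<delta> > 0" and n: "n \<ge> 1" and gh: "gauss_hermite n z h" using assms by auto
  have \<sigma>: "\<sigma> > 0" unfolding \<sigma>_def using g d by simp
  define a where "a = \<delta> / \<gamma>"
  have a: "a > 0" unfolding a_def using g d by simp
  define r where "r = real_of_int j - (p + 1/2)"
  define f where "f = (\<lambda>y. y powr r * gig_density \<gamma> \<delta> p y)"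
  define gg where "gg = (\<lambda>t. a * (sfun \<sigma> t)\<^sup>2)"
  define gg' where "gg' = (\<lambda>t. a * (sfun \<sigma> t)\<^sup>2 / (\<sigma> * sqrt (1 + (t / (2 * \<sigma>))\<^sup>2)))"
  define K0 where "K0 = gig_c \<gamma> \<delta> p * a powr (of_int j) * 2"
  have gpos: "gg t > 0" for t unfolding gg_def using a sfun_pos[of \<sigma> t] by simp
  have fg: "f (gg t) * gg' t = K0 * (Ef \<sigma> j t * std_normal_density t)" for t
  proof -
    define s where "s = sfun \<sigma> t"
    have s: "s > 0" unfolding s_def by (rule sfun_pos)
    have tz: "t = sqrt (\<gamma> * \<delta>) * (s - 1 / s)"
      unfolding s_def \<sigma>_def[symmetric] using sfun_diff \<sigma> by simp
    have cs: "sqrt (1 + (t / (2 * \<sigma>))\<^sup>2) = (s + 1 / s) / 2"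
      unfolding s_def using sfun_sum[of \<sigma> t] by simp
    show ?thesis
      unfolding f_def gg_def gg'_def K0_def Ef_def s_def[symmetric] cs r_def
      using key_alg[OF g d s tz, where p=p and j=j] unfolding a_def \<sigma>_def by simp
  qed
  have deriv: "DERIV gg t :> gg' t" for t
  proof -
    have "DERIV gg t :> a * (2 * sfun \<sigma> t * (sfun \<sigma> t / (2 * \<sigma> * sqrt (1 + (t / (2 * \<sigma>))\<^sup>2))))"
      unfolding gg_def by (auto intro!: derivative_eq_intros sfun_deriv[OF \<sigma>])
    moreover have "a * (2 * sfun \<sigma> t * (sfun \<sigma> t / (2 * \<sigma> * sqrt (1 + (t / (2 * \<sigma>))\<^sup>2)))) = gg' t"
      unfolding gg'_def using \<sigma> by (simp add: power2_eq_square field_simps)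
    ultimately show ?thesis by simp
  qed
  have contg': "isCont gg' t" for t
  proof -
    have nz: "1 + (t / (2 * \<sigma>))\<^sup>2 \<noteq> 0"
      by (metis add_pos_nonneg zero_less_one zero_le_power2 less_irrefl)
    show ?thesis
      unfolding gg'_def using \<sigma> sfun_isCont[OF \<sigma>] nz
      by (intro continuous_intros) auto
  qed
  have contf: "isCont f (gg t)" for t
    unfolding f_def by (rule f_isCont[OF gpos])
  have fnn: "0 \<le> f (gg t)" for t
    unfolding f_def using gpos[of t] gig_density_nonneg by simp
  have g'nn: "0 \<le> gg' t" for t
    unfolding gg'_def using a \<sigma> by simp
  have limA: "((ereal \<circ> gg \<circ> real_of_ereal) \<longlongrightarrow> ereal 0) (at_right (-\<infinity>))"
  proof -
    have "((\<lambda>t. a * (sfun \<sigma> t)\<^sup>2) \<longlongrightarrow> a * 0\<^sup>2) at_bot"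
      by (intro tendsto_intros sfun_at_bot[OF \<sigma>])
    then have "(gg \<longlongrightarrow> 0) at_bot" unfolding gg_def by simp
    then show ?thesis unfolding ereal_tendsto_simps by simp
  qed
  have limB: "((ereal \<circ> gg \<circ> real_of_ereal) \<longlongrightarrow> \<infinity>) (at_left \<infinity>)"
  proof -
    have "filterlim (\<lambda>t. (sfun \<sigma> t) ^ 2) at_top at_top"
      by (rule filterlim_pow_at_top[OF _ sfun_at_top[OF \<sigma>]]) simp
    then have "filterlim gg at_top at_top"
      unfolding gg_def by (rule filterlim_tendsto_pos_mult_at_top[OF tendsto_const a])
    then show ?thesis unfolding ereal_tendsto_simps by simp
  qed
  obtain iE: "integrable lborel (\<lambda>x. Ef \<sigma> j x * std_normal_density x)"
    and qE: "(\<Sum>k<n. h k * Ef \<sigma> j (z k)) = (\<integral>x. Ef \<sigma> j x * std_normal_density x \<partial>lborel)"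
    using quad_E[OF gh n \<sigma> j1 j2] by blast
  have ifg: "set_integrable lborel (einterval (-\<infinity>) \<infinity>) (\<lambda>t. f (gg t) * gg' t)"
    unfolding set_integrable_def fg using iE by simp
  note sub = interval_integral_substitution_nonneg[where a="-\<infinity>" and b="\<infinity>" and f=f and g=gg and g'=gg'
      and A="ereal 0" and B="\<infinity>", OF _ deriv contf contg' fnn g'nn limA limB ifg]
  have S1: "set_integrable lborel {0<..} f"
    using sub(1) by simp
  have "(LBINT y:{0<..}. f y) = (LBINT y=ereal 0..\<infinity>. f y)"
    by (subst interval_integral_Ioi) simp_all
  also have "\<dots> = (LBINT t=-\<infinity>..\<infinity>. f (gg t) * gg' t)"
    using sub(2) by simp
  also have "\<dots> = (\<integral>t. f (gg t) * gg' t \<partial>lborel)"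
    unfolding interval_lebesgue_integral_def set_lebesgue_integral_def by simp
  also have "\<dots> = K0 * (\<integral>t. Ef \<sigma> j t * std_normal_density t \<partial>lborel)"
    unfolding fg by simp
  also have "\<dots> = K0 * (\<Sum>k<n. h k * Ef \<sigma> j (z k))"
    unfolding qE ..
  also have "\<dots> = (\<Sum>k<n. x k powr r * wbar k)"
    unfolding sum_distrib_left
  proof (rule sum.cong)
    fix k assume "k \<in> {..<n}"
    define s where "s = sfun \<sigma> (z k)"
    have s: "s > 0" unfolding s_def by (rule sfun_pos)
    have xk: "x k = a * s\<^sup>2" unfolding x_def a_def s_def using phi_inv_sfun[OF \<sigma>] by simp
    have wk: "w k = 2 * h k / (1 + s\<^sup>2)" unfolding w_def s_def using phi_inv_sfun[OF \<sigma>] by simp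
    have xp: "x k powr r * x k powr (p + 1/2) = a powr (of_int j) * s powr (2 * of_int j)"
    proof -
      have "x k powr r * x k powr (p + 1/2) = x k powr (r + (p + 1/2))" by (rule powr_add[symmetric])
      also have "r + (p + 1/2) = of_int j" unfolding r_def by simp
      finally show ?thesis unfolding xk using powr_as2[OF a s] by simp
    qed
    show "K0 * (h k * Ef \<sigma> j (z k)) = x k powr r * wbar k"
      unfolding wbar_def K0_def Ef_def s_def[symmetric] wk
      using xp by (simp add: field_simps)
  qed simp
  finally have S2: "(LBINT y:{0<..}. f y) = (\<Sum>k<n. x k powr r * wbar k)" .
  show "let r = real_of_int j - (p + 1/2) in
          set_integrable lborel {0<..} (\<lambda>y. y powr r * gig_density \<gamma> \<delta> p y) \<and>
          (LBINT y:{0<..}. y powr r * gig_density \<gamma> \<delta> p y) = (\<Sum>k<n. x k powr r * wbar k)"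
    using S1 S2 unfolding Let_def r_def[symmetric] f_def by simp
qed

end
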